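(* For every integer $p\ge 2$, the path $P_p$ on $p$ vertices satisfies $\gamma_{[3R]}(P_p)=M_p$, where $M_p=4\lfloor p/3\rfloor$ if $p\equiv 0\pmod 3$, $M_p=4\lfloor p/3\rfloor+3$ if $p\equiv 1\pmod 3$, and $M_p=4\lfloor p/3\rfloor+4$ if $p\equiv 2\pmod 3$.
   Context: For a graph $\Gamma=(V,E)$ and $h:V\to\{0,1,2,3,4\}$, let $AN(v)=\{w\in N(v):h(w)\ge 1\}$, $AN[v]=AN(v)\cup\{v\}$ and $h(S)=\sum_{u\in S}h(u)$. $h$ is a triple Roman dominating function (3RDF) if every $v$ with $h(v)<3$ satisfies $h(AN[v])\ge|AN(v)|+3$. The triple Roman domination number $\gamma_{[3R]}(\Gamma)$ is the minimum weight $h(V)$ of a 3RDF of $\Gamma$. *)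

theory Defs
  imports Main
begin

text \<open>Functions h : V -> {0,...,4} are represented as
  h :: 'a => nat with h v <= 4 on V (values outside V are irrelevant).\<close>

definition active_nbhd :: "'a set \<Rightarrow> ('a \<Rightarrow> 'a \<Rightarrow> bool) \<Rightarrow> ('a \<Rightarrow> nat) \<Rightarrow> 'a \<Rightarrow> 'a set" where
  "active_nbhd V E h v = {w \<in> V. E v w \<and> h w \<ge> 1}"

definition is_3RDF :: "'a set \<Rightarrow> ('a \<Rightarrow> 'a \<Rightarrow> bool) \<Rightarrow> ('a \<Rightarrow> nat) \<Rightarrow> bool" where
  "is_3RDF V E h \<longleftrightarrow>
     (\<forall>v\<in>V. h v \<le> 4) \<and>
     (\<forall>v\<in>V. h v < 3 \<longrightarrow>
        sum h (insert v (active_nbhd V E h v)) \<ge> card (active_nbhd V E h v) + 3)"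

definition gamma_3R :: "'a set \<Rightarrow> ('a \<Rightarrow> 'a \<Rightarrow> bool) \<Rightarrow> nat" where
  "gamma_3R V E = Min {sum h V | h. is_3RDF V E h}"

definition path_vertices :: "nat \<Rightarrow> nat set" where
  "path_vertices p = {0..<p}"

definition path_adj :: "nat \<Rightarrow> nat \<Rightarrow> bool" where
  "path_adj i j \<longleftrightarrow> i + 1 = j \<or> j + 1 = i"

end

theory Submission
  imports Defs
begin

definition cond3 :: "nat \<Rightarrow> nat \<Rightarrow> nat \<Rightarrow> bool" where
  "cond3 a b c \<longleftrightarrow> (b < 3 \<longrightarrow> 3 + (if a \<ge> 1 then 1 else 0) + (if c \<ge> 1 then 1 else 0) \<le> a + b + c)"

lemma le4: "(a::nat) \<le> 4 \<Longrightarrow> a = 0 \<or> a = 1 \<or> a = 2 \<or> a = 3 \<or> a = 4" by auto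
lemma lt3: "(a::nat) < 3 \<Longrightarrow> a = 0 \<or> a = 1 \<or> a = 2" by auto

definition psi :: "nat \<Rightarrow> nat \<Rightarrow> nat \<Rightarrow> int" where
  "psi r a b = [[[0, 1, 1, 2, 3], [0, 1, 2, 3, 4], [0, 1, 2, 3, 4], [0, 1, 2, 3, 4], [0, 1, 2, 3, 4]],
                [[0, 1, 2, 3, 4], [1, 2, 3, 4, 5], [2, 3, 3, 4, 5], [2, 3, 4, 5, 6], [3, 4, 5, 6, 7]],
                [[3, 4, 4, 5, 4], [3, 4, 5, 4, 5], [3, 4, 4, 5, 6], [3, 4, 5, 6, 7], [4, 5, 6, 7, 8]]] ! r ! a ! b"

lemma trans_step:
  assumes "r < 3" "a \<le> 4" "b \<le> 4" "c \<le> 4" "cond3 a b c"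
  shows "psi ((r + 1) mod 3) b c + (if r = 2 then 4 else 0) \<le> psi r a b + int c"
  using assms
  apply (simp only: cond3_def psi_def)
  using lt3[OF assms(1)] le4[OF assms(2)] le4[OF assms(3)] le4[OF assms(4)]
  by (elim disjE; simp)

lemma base_step:
  assumes "a \<le> 4" "b \<le> 4" "cond3 0 a b"
  shows "psi 2 a b \<le> int a + int b"
  using assms
  apply (simp only: cond3_def psi_def)
  using le4[OF assms(1)] le4[OF assms(2)]
  by (elim disjE; simp)

lemma final_step:
  assumes "r < 3" "a \<le> 4" "b \<le> 4" "cond3 a b 0"
  shows "psi r a b \<ge> (if r = 0 then 0 else if r = 1 then 3 else 4)"
  using assms
  apply (simp only: cond3_def psi_def)
  using lt3[OF assms(1)] le4[OF assms(2)] le4[OF assms(3)]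
  by (elim disjE; simp)


lemma an_eq:
  assumes "v < p"
  shows "active_nbhd {0..<p} path_adj h v =
    (if 0 < v \<and> 1 \<le> h (v - 1) then {v - 1} else {}) \<union> (if v + 1 < p \<and> 1 \<le> h (v + 1) then {v + 1} else {})"
  using assms unfolding active_nbhd_def path_adj_def by auto

lemma local_iff:
  assumes "v < p"
  shows "(h v < 3 \<longrightarrow> card (active_nbhd {0..<p} path_adj h v) + 3 \<le> sum h (insert v (active_nbhd {0..<p} path_adj h v)))
     \<longleftrightarrow> cond3 (if v = 0 then 0 else h (v - 1)) (h v) (if v + 1 < p then h (v + 1) else 0)"
proof -
  have d1: "v - 1 \<noteq> v + 1" "0 < v \<Longrightarrow> v - 1 \<noteq> v" by auto
  show ?thesis
    unfolding an_eq[OF assms] cond3_def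
    by (cases "0 < v"; cases "v + 1 < p"; cases "1 \<le> h (v - 1)"; cases "1 \<le> h (v + 1)";
        simp add: d1; linarith?)
qed

lemma rdf_iff:
  "is_3RDF (path_vertices p) path_adj h \<longleftrightarrow>
    (\<forall>v<p. h v \<le> 4) \<and> (\<forall>v<p. cond3 (if v = 0 then 0 else h (v - 1)) (h v) (if v + 1 < p then h (v + 1) else 0))"
  unfolding is_3RDF_def path_vertices_def using local_iff[of _ p h] by auto

lemma aux1: "4 * a + x \<le> S \<Longrightarrow> y + 4 \<le> x + c \<Longrightarrow> 4 * (a + 1) + y \<le> S + (c::int)" by arith
lemma aux0: "4 * a + x \<le> S \<Longrightarrow> y + 0 \<le> x + c \<Longrightarrow> 4 * (a + 0) + y \<le> S + (c::int)" by arith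

lemma lb:
  assumes "2 \<le> n" "\<forall>v<n. h v \<le> 4"
    "\<forall>v. v + 1 < n \<longrightarrow> cond3 (if v = 0 then 0 else h (v - 1)) (h v) (h (v + 1))"
  shows "4 * int (n div 3) + psi (n mod 3) (h (n - 2)) (h (n - 1)) \<le> int (sum h {0..<n})"
  using assms
proof (induction n rule: nat_induct_at_least)
  case base
  have "psi 2 (h 0) (h 1) \<le> int (h 0) + int (h 1)"
    using base_step[of "h 0" "h 1"] base.prems by auto
  then show ?case by (simp add: numeral_2_eq_2)
next
  case (Suc n)
  have IH: "4 * int (n div 3) + psi (n mod 3) (h (n - 2)) (h (n - 1)) \<le> int (sum h {0..<n})"
    using Suc.IH Suc.prems by auto
  have c: "cond3 (h (n - 2)) (h (n - 1)) (h n)"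
  proof -
    have e1: "n - 1 + 1 < Suc n" "n - 1 \<noteq> 0" "n - 1 - 1 = n - 2" "n - 1 + 1 = n"
      using Suc.hyps by auto
    have "cond3 (if n - 1 = 0 then 0 else h (n - 1 - 1)) (h (n - 1)) (h (n - 1 + 1))"
      using Suc.prems(2) e1(1) by blast
    then show ?thesis by (simp only: e1 if_False)
  qed
  have t: "psi ((n mod 3 + 1) mod 3) (h (n - 1)) (h n) + (if n mod 3 = 2 then 4 else 0)
      \<le> psi (n mod 3) (h (n - 2)) (h (n - 1)) + int (h n)"
    by (rule trans_step) (use Suc.prems(1) Suc.hyps c in auto)
  have m: "Suc n mod 3 = (n mod 3 + 1) mod 3" by (simp add: mod_Suc)
  have dv0: "Suc n div 3 = n div 3 + (if n mod 3 = 2 then 1 else 0)" by presburger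
  have dv: "int (Suc n div 3) = int (n div 3) + (if n mod 3 = 2 then 1 else 0)"
    unfolding dv0 by simp
  have s: "int (sum h {0..<Suc n}) = int (sum h {0..<n}) + int (h n)" by simp
  have e: "Suc n - 2 = n - 1" "Suc n - 1 = n" by auto
  show ?case
  proof (cases "n mod 3 = 2")
    case True
    show ?thesis unfolding m dv s e using IH t by (simp only: if_P[OF True]) (rule aux1)
  next
    case False
    show ?thesis unfolding m dv s e using IH t by (simp only: if_not_P[OF False]) (rule aux0)
  qed
qed


definition target :: "nat \<Rightarrow> nat" where
  "target p = (if p mod 3 = 0 then 4 * (p div 3)
            else if p mod 3 = 1 then 4 * (p div 3) + 3
            else 4 * (p div 3) + 4)"

lemma lower:
  assumes "2 \<le> p" "is_3RDF (path_vertices p) path_adj h"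
  shows "target p \<le> sum h (path_vertices p)"
proof -
  have b: "\<forall>v<p. h v \<le> 4"
    and c: "\<forall>v<p. cond3 (if v = 0 then 0 else h (v - 1)) (h v) (if v + 1 < p then h (v + 1) else 0)"
    using assms(2) unfolding rdf_iff by auto
  have c2: "\<forall>v. v + 1 < p \<longrightarrow> cond3 (if v = 0 then 0 else h (v - 1)) (h v) (h (v + 1))"
  proof (intro allI impI)
    fix v assume "v + 1 < p"
    then show "cond3 (if v = 0 then 0 else h (v - 1)) (h v) (h (v + 1))"
      using c[rule_format, of v] by simp
  qed
  have L: "4 * int (p div 3) + psi (p mod 3) (h (p - 2)) (h (p - 1)) \<le> int (sum h {0..<p})"
    by (rule lb[OF assms(1) b c2])
  have e1: "p - 1 < p" "p - 1 \<noteq> 0" "p - 1 - 1 = p - 2" "\<not> (p - 1 + 1 < p)"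
    using assms(1) by auto
  have "cond3 (if p - 1 = 0 then 0 else h (p - 1 - 1)) (h (p - 1)) (if p - 1 + 1 < p then h (p - 1 + 1) else 0)"
    using c e1(1) by blast
  then have cl: "cond3 (h (p - 2)) (h (p - 1)) 0" by (simp only: e1 if_False)
  have F: "psi (p mod 3) (h (p - 2)) (h (p - 1)) \<ge> (if p mod 3 = 0 then 0 else if p mod 3 = 1 then 3 else 4)"
    by (rule final_step) (use b e1 cl assms(1) in auto)
  have "int (target p) \<le> int (sum h {0..<p})"
    using L F unfolding target_def by (auto split: if_splits)
  then have "target p \<le> sum h {0..<p}" by (simp only: of_nat_le_iff)
  then show ?thesis unfolding path_vertices_def .
qed

lemma cond_suff: "4 \<le> a \<or> 3 \<le> b \<or> 4 \<le> c \<Longrightarrow> cond3 a b c"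
  unfolding cond3_def by auto

lemma sum_f: "(\<Sum>v<n. (if v mod 3 = 1 then 4 else 0::nat)) = 4 * (n div 3) + (if n mod 3 = 2 then 4 else 0)"
proof (induction n)
  case 0
  then show ?case by simp
next
  case (Suc n)
  have d: "Suc n div 3 = n div 3 + (if n mod 3 = 2 then 1 else 0)" by presburger
  have m: "Suc n mod 3 = (if n mod 3 = 2 then 0 else n mod 3 + 1)" by presburger
  have s: "(\<Sum>v<Suc n. (if v mod 3 = 1 then 4 else 0::nat)) = (\<Sum>v<n. (if v mod 3 = 1 then 4 else 0::nat)) + (if n mod 3 = 1 then 4 else 0)"
    by simp
  have "n mod 3 = 0 \<or> n mod 3 = 1 \<or> n mod 3 = 2" by presburger
  then show ?case unfolding s Suc d m by auto
qed

definition h0 :: "nat \<Rightarrow> nat \<Rightarrow> nat" where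
  "h0 p v = (if v mod 3 = 1 then 4 else 0) + (if v = p - 1 then (if p mod 3 = 1 then 3 else 0) else 0)"

lemma h0_bd: "h0 p v \<le> 4"
proof (cases "v mod 3 = 1")
  case True
  have "\<not> (v = p - 1 \<and> p mod 3 = 1)"
  proof
    assume a: "v = p - 1 \<and> p mod 3 = 1"
    then have "p \<noteq> 0" by auto
    then have "p = Suc v" using a by auto
    then have "p mod 3 = 2" using True by (simp add: mod_Suc)
    then show False using a by simp
  qed
  then show ?thesis unfolding h0_def using True by auto
next
  case False
  then show ?thesis unfolding h0_def by auto
qed

lemma ar1: "(v::nat) mod 3 = 0 \<or> v mod 3 = 1 \<or> v mod 3 = 2" by presburger
lemma ar2: "(v::nat) mod 3 = 0 \<Longrightarrow> (v + 1) mod 3 = 1" by presburger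
lemma ar3: "(v::nat) mod 3 = 2 \<Longrightarrow> (v - 1) mod 3 = 1"
  by (cases v) (auto simp: mod_Suc split: if_splits)
lemma ar4: "(v::nat) mod 3 = 2 \<Longrightarrow> v \<noteq> 0" by auto

lemma h0_cond:
  assumes "v < p"
  shows "cond3 (if v = 0 then 0 else h0 p (v - 1)) (h0 p v) (if v + 1 < p then h0 p (v + 1) else 0)"
proof -
  have "v + 1 < p \<or> v + 1 = p" using assms by auto
  then consider "v mod 3 = 1" | "v mod 3 = 0" "v + 1 < p" | "v mod 3 = 0" "v + 1 = p" | "v mod 3 = 2"
    using ar1[of v] by auto
  then show ?thesis
  proof cases
    case 1
    then have "h0 p v \<ge> 4" unfolding h0_def by simp
    then show ?thesis by (intro cond_suff) simp
  next
    case 2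
    then have "(v + 1) mod 3 = 1" by (intro ar2)
    then have "h0 p (v + 1) \<ge> 4" unfolding h0_def by simp
    then show ?thesis using 2 by (intro cond_suff) simp
  next
    case 3
    then have "p mod 3 = 1" using ar2[of v] by simp
    moreover have "v = p - 1" using 3 by simp
    ultimately have "h0 p v \<ge> 3" unfolding h0_def by simp
    then show ?thesis by (intro cond_suff) simp
  next
    case 4
    have "(v - 1) mod 3 = 1" using 4 by (rule ar3)
    have "v \<noteq> 0" using 4 by (rule ar4)
    then have "h0 p (v - 1) \<ge> 4" using \<open>(v - 1) mod 3 = 1\<close> unfolding h0_def by simp
    then show ?thesis using \<open>v \<noteq> 0\<close> by (intro cond_suff) simp
  qed
qed

lemma h0_rdf: "2 \<le> p \<Longrightarrow> is_3RDF (path_vertices p) path_adj (h0 p)"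
proof -
  assume a: "2 \<le> p"
  have "\<forall>v<p. h0 p v \<le> 4" using h0_bd by blast
  moreover have "\<forall>v<p. cond3 (if v = 0 then 0 else h0 p (v - 1)) (h0 p v) (if v + 1 < p then h0 p (v + 1) else 0)"
    using h0_cond by blast
  ultimately show ?thesis unfolding rdf_iff by (rule conjI)
qed

lemma h0_sum1: "sum (h0 p) {0..<p} = (\<Sum>v<p. (if v mod 3 = 1 then 4 else 0::nat)) + (\<Sum>v<p. (if v = p - 1 then (if p mod 3 = 1 then 3 else 0) else 0::nat))"
  unfolding h0_def atLeast0LessThan by (rule sum.distrib)

lemma h0_sum2: "2 \<le> (p::nat) \<Longrightarrow> (\<Sum>v<p. (if v = p - 1 then (if p mod 3 = 1 then 3 else 0) else 0::nat)) = (if p mod 3 = 1 then 3 else 0)"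
  by (cases "p mod 3 = 1") (simp_all add: sum.delta)

lemma h0_sum: "2 \<le> p \<Longrightarrow> sum (h0 p) (path_vertices p) = target p"
proof -
  assume a: "2 \<le> p"
  have S: "sum (h0 p) {0..<p} = 4 * (p div 3) + (if p mod 3 = 2 then 4 else 0) + (if p mod 3 = 1 then 3 else 0)"
    unfolding h0_sum1 h0_sum2[OF a] sum_f ..
  have "p mod 3 = 0 \<or> p mod 3 = 1 \<or> p mod 3 = 2" by presburger
  then show ?thesis
    unfolding path_vertices_def target_def S by auto
qed

theorem proposition20:
  fixes p :: nat
  assumes "p \<ge> 2"
  shows "gamma_3R (path_vertices p) path_adj =
           (if p mod 3 = 0 then 4 * (p div 3)
            else if p mod 3 = 1 then 4 * (p div 3) + 3
            else 4 * (p div 3) + 4)"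
proof -
  let ?A = "{sum h (path_vertices p) | h. is_3RDF (path_vertices p) path_adj h}"
  have fin: "finite ?A"
  proof (rule finite_subset)
    show "?A \<subseteq> {..4 * p}"
    proof
      fix x assume "x \<in> ?A"
      then obtain h where x: "x = sum h (path_vertices p)" and r: "is_3RDF (path_vertices p) path_adj h" by blast
      have "sum h (path_vertices p) \<le> sum (\<lambda>_. 4) (path_vertices p)"
        by (rule sum_mono) (use r in \<open>auto simp: is_3RDF_def\<close>)
      then show "x \<in> {..4 * p}" using x by (simp add: path_vertices_def)
    qed
  qed simp
  have "Min ?A = target p"
  proof (rule Min_eqI[OF fin])
    fix y assume "y \<in> ?A"
    then show "target p \<le> y" using lower[OF assms] by blast
  next
    have "sum (h0 p) (path_vertices p) \<in> ?A"
      by (rule CollectI, rule exI[of _ "h0 p"], rule conjI, rule refl, rule h0_rdf[OF assms])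
    then show "target p \<in> ?A" unfolding h0_sum[OF assms] .
  qed
  then show ?thesis unfolding gamma_3R_def target_def .
qed

end
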